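(* Let $d,N\ge1$ and $1\le r\le d^N$. Work in the quotient $V=\mathbb{R}^{d\times N}/L$, where $L$ is the lineality space of the normal fans below, and let $\overline{\mathsf{T}}$ be the image of $\mathsf{T}_{d,N}$ in $V$. Let $\Sigma^r$ denote the normal fan (in $V$) of the $r$-lineup polytope of the vertex set of $\Pi_{d,N}$, and let $\mathcal{T}^r=\{C\cap\overline{\mathsf{T}}:C\in\Sigma^r\}$ be its test fan. Then every ray (one-dimensional cone) of $\mathcal{T}^r$ is a ray of $\Sigma^{d^N}$, the normal fan of the sweep polytope $\mathcal{L}(\Pi_{d,N})$. (It need not be a ray of $\Sigma^r$.)
   Context: $\Pi_{d,N}=(\Delta_{d-1})^N\subset\mathbb{R}^{d\times N}$ with vertices $(\mathbf{e}_{i_1},\dots,\mathbf{e}_{i_N})$, $i_j\in[d]$. $\mathsf{T}_{d,N}=\{\mathbf{x}: 0\le x_{1,j}\le\dots\le x_{d,j}\ \forall j\in[N]\}$. For a point configuration $\mathbf{A}$ of size $n$, $1\le r\le n$, and weights $w_1>\dots>w_r>0$ with $\sum w_i=1$, the $r$-lineup polytope is $\operatorname{conv}\{\sum_{i=1}^r w_i\mathbf{v}_i:(\mathbf{v}_1,\dots,\mathbf{v}_r)\text{ an ordered list of distinct points of }\mathbf{A}\}$; its normal fan does not depend on the weights, and for $r=n$ it is the sweep polytope $\mathcal{L}(\mathbf{A})$. $L$ is the orthogonal complement of the affine hull of $\Pi_{d,N}$, spanned by the vectors $\sum_{i=1}^d\mathbf{e}_{i,j}$, $j\in[N]$; all these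 normal fans contain $L$ in every cone, and are considered as fans in $V$. The fans satisfy the refinement chain $\Sigma^1\succeq\Sigma^2\succeq\dots\succeq\Sigma^{d^N}$. *)

theory Defs
  imports "HOL-Analysis.Analysis"
begin

text \<open>Ambient space R^(d x N) is real^('d \<times> 'n); coordinate x_{i,j} is x $ (i,j).
  d = CARD('d), N = CARD('n); the linear order on 'd labels the rows 1..d.\<close>

definition Pi_vert :: "('n \<Rightarrow> 'd) \<Rightarrow> real^('d::finite \<times> 'n::finite)" where
  "Pi_vert f = (\<chi> p. if fst p = f (snd p) then 1 else 0)"

text \<open>Vertex set of Pi_{d,N} = (Delta_{d-1})^N: tuples (e_{i_1},...,e_{i_N}).\<close>
definition Pi_vertices :: "(real^('d::finite \<times> 'n::finite)) set" where
  "Pi_vertices = range Pi_vert"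

text \<open>Weights w_1 > ... > w_r > 0 summing to 1 (indexed 0..r-1).\<close>
definition valid_weights :: "nat \<Rightarrow> (nat \<Rightarrow> real) \<Rightarrow> bool" where
  "valid_weights r w \<longleftrightarrow> (\<forall>i. i + 1 < r \<longrightarrow> w (i + 1) < w i) \<and> (\<forall>i<r. 0 < w i)
     \<and> (\<Sum>i<r. w i) = 1"

definition lineup_points :: "nat \<Rightarrow> (nat \<Rightarrow> real) \<Rightarrow> 'a::real_vector set \<Rightarrow> 'a set" where
  "lineup_points r w A =
     {(\<Sum>i<r. w i *\<^sub>R (vs ! i)) | vs. distinct vs \<and> length vs = r \<and> set vs \<subseteq> A}"

definition lineup_polytope :: "nat \<Rightarrow> (nat \<Rightarrow> real) \<Rightarrow> 'a::real_vector set \<Rightarrow> 'a set" where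
  "lineup_polytope r w A = convex hull (lineup_points r w A)"

definition face_normal_cone :: "'a::real_inner set \<Rightarrow> 'a set \<Rightarrow> 'a set" where
  "face_normal_cone P F = {c. \<forall>x\<in>F. \<forall>y\<in>P. inner c y \<le> inner c x}"

definition normal_fan :: "'a::real_inner set \<Rightarrow> 'a set set" where
  "normal_fan P = {face_normal_cone P F | F. F face_of P \<and> F \<noteq> {}}"

definition T_cone :: "(real^('d::{finite,linorder} \<times> 'n::finite)) set" where
  "T_cone = {x. \<forall>j. (\<forall>i. 0 \<le> x $ (i, j)) \<and> (\<forall>i i'. i \<le> i' \<longrightarrow> x $ (i, j) \<le> x $ (i', j))}"

definition L_space :: "(real^('d::finite \<times> 'n::finite)) set" where
  "L_space = span (range (\<lambda>j. (\<chi> p. if snd p = j then 1 else 0)))"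

text \<open>Preimage in R^(d x N) of the image of T_{d,N} in V = R^(d x N)/L.\<close>
definition T_bar :: "(real^('d::{finite,linorder} \<times> 'n::finite)) set" where
  "T_bar = {t + l | t l. t \<in> T_cone \<and> l \<in> L_space}"

definition test_fan :: "(real^('d::{finite,linorder} \<times> 'n::finite)) set set
    \<Rightarrow> (real^('d \<times> 'n)) set set" where
  "test_fan F = {C \<inter> T_bar | C. C \<in> F}"

end

theory Submission
  imports Defs "HOL-Library.Cardinality"
begin


definition vlist :: "nat \<Rightarrow> 'a set \<Rightarrow> 'a list \<Rightarrow> bool" where
  "vlist r A vs \<longleftrightarrow> distinct vs \<and> length vs = r \<and> set vs \<subseteq> A"

definition lval :: "nat \<Rightarrow> (nat \<Rightarrow> real) \<Rightarrow> 'a::real_inner \<Rightarrow> 'a list \<Rightarrow> real" where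
  "lval r w c vs = (\<Sum>i<r. w i * inner c (vs ! i))"

definition lpt :: "nat \<Rightarrow> (nat \<Rightarrow> real) \<Rightarrow> 'a::real_vector list \<Rightarrow> 'a" where
  "lpt r w vs = (\<Sum>i<r. w i *\<^sub>R (vs ! i))"

definition optimal :: "nat \<Rightarrow> (nat \<Rightarrow> real) \<Rightarrow> 'a::real_inner set \<Rightarrow> 'a \<Rightarrow> 'a list \<Rightarrow> bool" where
  "optimal r w A c vs \<longleftrightarrow> vlist r A vs \<and> (\<forall>us. vlist r A us \<longrightarrow> lval r w c us \<le> lval r w c vs)"

definition greedy :: "nat \<Rightarrow> 'a::real_inner set \<Rightarrow> 'a \<Rightarrow> 'a list \<Rightarrow> bool" where
  "greedy r A c vs \<longleftrightarrow> vlist r A vs \<and> (\<forall>i j. i < j \<longrightarrow> j < r \<longrightarrow> inner c (vs!j) \<le> inner c (vs!i))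
     \<and> (\<forall>x\<in>A - set vs. \<forall>i<r. inner c x \<le> inner c (vs!i))"

lemma inner_lpt: "inner c (lpt r w vs) = lval r w c vs"
  by (simp add: lpt_def lval_def inner_sum_right)

lemma lineup_points_eq: "lineup_points r w A = lpt r w ` {vs. vlist r A vs}"
  unfolding lineup_points_def lpt_def vlist_def by auto

lemma weights_strict:
  assumes "valid_weights r w" "i < j" "j < r"
  shows "w j < w i"
  using assms(2,3)
proof (induction j)
  case 0 then show ?case by simp
next
  case (Suc j)
  have "w (Suc j) < w j" using assms(1) Suc.prems unfolding valid_weights_def
    by (metis Suc_eq_plus1)
  show ?case
  proof (cases "i = j")
    case True then show ?thesis using \<open>w (Suc j) < w j\<close> by simp
  next
    case False then have "w j < w i" using Suc by auto
    then show ?thesis using \<open>w (Suc j) < w j\<close> by simp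
  qed
qed

lemma sum_two_pts:
  fixes a b :: real
  assumes "i < (r::nat)" "j < r" "i \<noteq> j"
  shows "(\<Sum>k<r. (if k = i then a else if k = j then b else 0)) = a + b"
proof -
  have "(\<Sum>k<r. (if k = i then a else if k = j then b else 0))
      = (\<Sum>k<r. (if k = i then a else 0) + (if k = j then b else 0))"
    by (rule sum.cong) (use assms in auto)
  also have "\<dots> = (\<Sum>k<r. (if k = i then a else 0)) + (\<Sum>k<r. (if k = j then b else 0))"
    by (rule sum.distrib)
  also have "(\<Sum>k<r. (if k = i then a else 0)) = a" using assms by (subst sum.delta) auto
  also have "(\<Sum>k<r. (if k = j then b else 0)) = b" using assms by (subst sum.delta) auto
  finally show ?thesis .
qed

lemma optimal_greedy:
  assumes vw: "valid_weights r w" and opt: "optimal r w A c vs"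
  shows "greedy r A c vs"
proof -
  have vl: "vlist r A vs" using opt optimal_def by blast
  then have len: "length vs = r" and dis: "distinct vs" and sub: "set vs \<subseteq> A"
    by (auto simp: vlist_def)
  have srt: "inner c (vs!j) \<le> inner c (vs!i)" if ij: "i < j" "j < r" for i j
  proof (rule ccontr)
    assume neg: "\<not> ?thesis"
    define us where "us = vs[i := vs!j, j := vs!i]"
    have "vlist r A us" using len dis sub ij unfolding us_def vlist_def by auto
    then have le: "lval r w c us \<le> lval r w c vs" using opt optimal_def by blast
    have "lval r w c us - lval r w c vs = (\<Sum>k<r. w k * inner c (us!k) - w k * inner c (vs!k))"
      by (simp add: lval_def sum_subtractf)
    also have "\<dots> = (\<Sum>k<r. (if k = i then w i * (inner c (vs!j) - inner c (vs!i))
         else if k = j then w j * (inner c (vs!i) - inner c (vs!j)) else 0))"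
      by (rule sum.cong) (use ij len in \<open>auto simp: us_def nth_list_update algebra_simps\<close>)
    also have "\<dots> = (w i - w j) * (inner c (vs!j) - inner c (vs!i))"
      using ij by (subst sum_two_pts) (auto simp: algebra_simps)
    finally have eq: "lval r w c us - lval r w c vs = (w i - w j) * (inner c (vs!j) - inner c (vs!i))" .
    have "w j < w i" using weights_strict[OF vw ij] .
    then have "(w i - w j) * (inner c (vs!j) - inner c (vs!i)) > 0" using neg by simp
    then show False using eq le by linarith
  qed
  have out: "inner c x \<le> inner c (vs!i)" if x: "x \<in> A - set vs" and i: "i < r" for x i
  proof (rule ccontr)
    assume neg: "\<not> ?thesis"
    define us where "us = vs[i := x]"
    have "distinct us" unfolding us_def using dis x by (intro distinct_list_update) auto
    moreover have "set us \<subseteq> A" unfolding us_def using sub x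
      by (meson DiffD1 insert_subset order_trans set_update_subset_insert)
    ultimately have "vlist r A us" using len unfolding us_def vlist_def by auto
    then have le: "lval r w c us \<le> lval r w c vs" using opt optimal_def by blast
    have "lval r w c us - lval r w c vs = (\<Sum>k<r. w k * inner c (us!k) - w k * inner c (vs!k))"
      by (simp add: lval_def sum_subtractf)
    also have "\<dots> = (\<Sum>k<r. (if k = i then w i * (inner c x - inner c (vs!i)) else 0))"
      by (rule sum.cong) (use i len in \<open>auto simp: us_def nth_list_update algebra_simps\<close>)
    also have "\<dots> = w i * (inner c x - inner c (vs!i))" using i by simp
    finally have eq: "lval r w c us - lval r w c vs = w i * (inner c x - inner c (vs!i))" .
    have "w i > 0" using vw i unfolding valid_weights_def by blast
    then have "w i * (inner c x - inner c (vs!i)) > 0" using neg by simp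
    then show False using eq le by linarith
  qed
  show ?thesis unfolding greedy_def using vl srt out by blast
qed

lemma greedy_not_less:
  assumes g1: "greedy r A c vs" and g2: "greedy r A c us" and i: "i < r" and fin: "finite A"
  shows "\<not> inner c (vs!i) < inner c (us!i)"
proof
  assume lt: "inner c (vs!i) < inner c (us!i)"
  define S where "S = {x\<in>A. inner c (us!i) \<le> inner c x}"
  have lv: "length vs = r" "distinct vs" "set vs \<subseteq> A" using g1 by (auto simp: greedy_def vlist_def)
  have lu: "length us = r" "distinct us" "set us \<subseteq> A" using g2 by (auto simp: greedy_def vlist_def)
  have "set (take (Suc i) us) \<subseteq> S"
  proof
    fix x assume "x \<in> set (take (Suc i) us)"
    then obtain k where k: "k < length (take (Suc i) us)" "x = take (Suc i) us ! k"
      by (metis in_set_conv_nth)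
    then have "k \<le> i" "x = us ! k" using i lu by auto
    moreover have "x \<in> A"
    proof -
      have "k < length us" using \<open>k \<le> i\<close> i lu by simp
      then have "us ! k \<in> set us" by (rule nth_mem)
      then show ?thesis using \<open>x = us!k\<close> lu by blast
    qed
    moreover have "inner c (us!i) \<le> inner c (us!k)" if "k < i" using g2 i that unfolding greedy_def by blast
    ultimately show "x \<in> S" unfolding S_def by (cases "k < i") auto
  qed
  moreover have "S \<subseteq> set (take i vs)"
  proof
    fix x assume x: "x \<in> S"
    show "x \<in> set (take i vs)"
    proof (cases "x \<in> set vs")
      case False
      then have "inner c x \<le> inner c (vs!i)" using g1 i x unfolding greedy_def S_def by blast
      then show ?thesis using x lt unfolding S_def by auto
    next
      case True
      then obtain k where k: "k < r" "x = vs!k" using lv by (metis in_set_conv_nth)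
      show ?thesis
      proof (cases "k < i")
        case True
        have "take i vs ! k \<in> set (take i vs)" using k lv True i by (intro nth_mem) simp
        then show ?thesis using True k by simp
      next
        case False
        then have "inner c (vs!k) \<le> inner c (vs!i)" using g1 k unfolding greedy_def
          by (cases "k = i") auto
        then show ?thesis using x lt k unfolding S_def by auto
      qed
    qed
  qed
  ultimately have "set (take (Suc i) us) \<subseteq> set (take i vs)" by blast
  then have "card (set (take (Suc i) us)) \<le> card (set (take i vs))"
    by (intro card_mono) auto
  moreover have "card (set (take (Suc i) us)) = Suc i"
    using lu i by (simp add: distinct_card)
  moreover have "card (set (take i vs)) \<le> i"
    using card_length[of "take i vs"] by simp
  ultimately show False by simp
qed

lemma greedy_lval_eq:
  assumes "greedy r A c vs" "greedy r A c us" "finite A"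
  shows "lval r w c vs = lval r w c us"
proof -
  have "inner c (vs!i) = inner c (us!i)" if "i < r" for i
    using greedy_not_less[OF assms(1,2) that assms(3)] greedy_not_less[OF assms(2,1) that assms(3)]
    by linarith
  then show ?thesis unfolding lval_def by simp
qed

lemma vlist_exists:
  assumes "finite A" "r \<le> card A"
  shows "\<exists>vs. vlist r A vs"
proof -
  obtain xs where xs: "set xs = A" "distinct xs" using finite_distinct_list[OF assms(1)] by blast
  then have "length xs = card A" using distinct_card[of xs] by simp
  then show ?thesis using xs assms unfolding vlist_def
    by (intro exI[of _ "take r xs"]) (auto dest: in_set_takeD)
qed

lemma finite_vlists:
  assumes "finite A"
  shows "finite {vs. vlist r A vs}"
proof -
  have "{vs. vlist r A vs} \<subseteq> {xs. set xs \<subseteq> A \<and> length xs = r}" unfolding vlist_def by auto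
  then show ?thesis using finite_lists_length_eq[OF assms] finite_subset by blast
qed

lemma optimal_exists:
  assumes "finite A" "r \<le> card A"
  shows "\<exists>vs. optimal r w A c vs"
proof -
  let ?L = "{vs. vlist r A vs}"
  have fin: "finite ?L" using finite_vlists[OF assms(1)] .
  have ne: "?L \<noteq> {}" using vlist_exists[OF assms] by blast
  have "Max (lval r w c ` ?L) \<in> lval r w c ` ?L" using fin ne by (intro Max_in) auto
  then obtain vs where vs: "vs \<in> ?L" "lval r w c vs = Max (lval r w c ` ?L)" by force
  have "lval r w c us \<le> lval r w c vs" if "vlist r A us" for us
    using vs fin that by (simp add: Max_ge)
  then show ?thesis using vs unfolding optimal_def by blast
qed

lemma greedy_optimal:
  assumes vw: "valid_weights r w" and fin: "finite A" and rA: "r \<le> card A"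
    and g: "greedy r A c vs"
  shows "optimal r w A c vs"
proof -
  obtain os where os: "optimal r w A c os" using optimal_exists[OF fin rA] by blast
  have "greedy r A c os" using optimal_greedy[OF vw os] .
  then have "lval r w c vs = lval r w c os" using greedy_lval_eq[OF g _ fin] by blast
  then show ?thesis using os g unfolding optimal_def greedy_def by simp
qed



lemma hull_le:
  assumes "\<forall>p\<in>P. inner c p \<le> M" "y \<in> convex hull P"
  shows "inner c y \<le> M"
proof -
  have "convex hull P \<subseteq> {x. inner c x \<le> M}"
    using assms(1) by (intro hull_minimal) (auto simp: convex_halfspace_le)
  then show ?thesis using assms(2) by blast
qed

lemma hull_eq:
  assumes "\<forall>p\<in>P. inner c p = M" "y \<in> convex hull P"
  shows "inner c y = M"
proof -
  have "convex hull P \<subseteq> {x. inner c x = M}"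
    using assms(1) by (intro hull_minimal) (auto simp: convex_hyperplane)
  then show ?thesis using assms(2) by blast
qed

lemma transfer:
  fixes P :: "'a::real_inner set"
  assumes fin: "finite P" and x: "x \<in> convex hull P"
    and ule: "\<forall>p\<in>P. inner u p \<le> Mu" and ux: "inner u x = Mu"
    and uc: "\<forall>p\<in>P. inner u p = Mu \<longrightarrow> inner c p = Mc"
  shows "inner c x = Mc"
proof -
  obtain \<mu> where mu: "\<forall>p\<in>P. 0 \<le> \<mu> p" "sum \<mu> P = 1" "(\<Sum>p\<in>P. \<mu> p *\<^sub>R p) = x"
    using x unfolding convex_hull_finite[OF fin] by blast
  have ix: "inner v x = (\<Sum>p\<in>P. \<mu> p * inner v p)" for v
    using mu(3) by (auto simp: inner_sum_right)
  have "(\<Sum>p\<in>P. \<mu> p * (Mu - inner u p)) = Mu * sum \<mu> P - (\<Sum>p\<in>P. \<mu> p * inner u p)"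
    by (simp add: algebra_simps sum_subtractf sum_distrib_left)
  then have "(\<Sum>p\<in>P. \<mu> p * (Mu - inner u p)) = Mu - inner u x"
    using mu(2) by (simp add: ix)
  then have "(\<Sum>p\<in>P. \<mu> p * (Mu - inner u p)) = 0" using ux by simp
  moreover have nn: "\<forall>p\<in>P. 0 \<le> \<mu> p * (Mu - inner u p)"
  proof
    fix p assume p: "p \<in> P"
    have "0 \<le> \<mu> p" using mu(1) p by blast
    moreover have "0 \<le> Mu - inner u p" using ule p by auto
    ultimately show "0 \<le> \<mu> p * (Mu - inner u p)" by (rule mult_nonneg_nonneg)
  qed
  moreover have "((\<Sum>p\<in>P. \<mu> p * (Mu - inner u p)) = 0) = (\<forall>p\<in>P. \<mu> p * (Mu - inner u p) = 0)"
    by (rule sum_nonneg_eq_0_iff[OF fin]) (use nn in blast)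
  ultimately have z: "\<forall>p\<in>P. \<mu> p * (Mu - inner u p) = 0" by simp
  have z2: "\<mu> p * (Mc - inner c p) = 0" if "p \<in> P" for p
  proof (cases "\<mu> p = 0")
    case False
    have "\<mu> p * (Mu - inner u p) = 0" using z that by blast
    then have "inner u p = Mu" using False by simp
    then show ?thesis using uc that by simp
  qed simp
  have "(\<Sum>p\<in>P. \<mu> p * (Mc - inner c p)) = Mc * sum \<mu> P - (\<Sum>p\<in>P. \<mu> p * inner c p)"
    by (simp add: algebra_simps sum_subtractf sum_distrib_left)
  then have "Mc - inner c x = (\<Sum>p\<in>P. \<mu> p * (Mc - inner c p))"
    using mu(2) by (simp add: ix)
  also have "\<dots> = (\<Sum>p\<in>P. 0)" by (rule sum.cong) (use z2 in auto)
  also have "\<dots> = 0" by simp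
  finally show ?thesis by simp
qed

lemma lineup_le_opt:
  assumes os: "optimal r w A u os" and y: "y \<in> lineup_polytope r w A"
  shows "inner u y \<le> lval r w u os"
proof (rule hull_le[OF _ y[unfolded lineup_polytope_def]])
  show "\<forall>p\<in>lineup_points r w A. inner u p \<le> lval r w u os"
    using os unfolding lineup_points_eq optimal_def by (auto simp: inner_lpt)
qed

lemma lpt_in:
  assumes "vlist r A vs" shows "lpt r w vs \<in> lineup_polytope r w A"
  using assms unfolding lineup_polytope_def lineup_points_eq by (auto intro: hull_inc)

lemma main_r:
  assumes vw: "valid_weights r w" and fin: "finite A" and rA: "r \<le> card A"
    and coarse: "\<forall>a\<in>A. \<forall>b\<in>A. inner u a \<le> inner u b \<longrightarrow> inner c a \<le> inner c b"
    and x: "x \<in> lineup_polytope r w A"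
    and xmax: "\<forall>y\<in>lineup_polytope r w A. inner u y \<le> inner u x"
  shows "\<forall>y\<in>lineup_polytope r w A. inner c y \<le> inner c x"
proof -
  obtain ou where ou: "optimal r w A u ou" using optimal_exists[OF fin rA] by blast
  obtain oc where oc: "optimal r w A c oc" using optimal_exists[OF fin rA] by blast
  let ?P = "lineup_points r w A"
  have finP: "finite ?P" unfolding lineup_points_eq using finite_vlists[OF fin] by simp
  have "inner u x \<le> lval r w u ou" using lineup_le_opt[OF ou x] .
  moreover have "inner u (lpt r w ou) \<le> inner u x"
    using xmax lpt_in[of r A ou w] ou unfolding optimal_def by blast
  ultimately have ux: "inner u x = lval r w u ou" by (simp add: inner_lpt)
  have uc: "\<forall>p\<in>?P. inner u p = lval r w u ou \<longrightarrow> inner c p = lval r w c oc"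
  proof (intro ballI impI)
    fix p assume p: "p \<in> ?P" and eq: "inner u p = lval r w u ou"
    then obtain vs where vs: "vlist r A vs" "p = lpt r w vs" unfolding lineup_points_eq by auto
    have "optimal r w A u vs" using ou vs eq unfolding optimal_def by (simp add: inner_lpt)
    then have gu: "greedy r A u vs" using optimal_greedy[OF vw] by blast
    have "greedy r A c vs"
    proof -
      have sub: "set vs \<subseteq> A" using vs(1) unfolding vlist_def by blast
      have len: "length vs = r" using vs(1) unfolding vlist_def by blast
      have nth: "vs ! i \<in> A" if "i < r" for i using sub len that nth_mem by blast
      have s1: "inner c (vs!j) \<le> inner c (vs!i)" if "i < j" "j < r" for i j
      proof -
        have "inner u (vs!j) \<le> inner u (vs!i)" using gu that unfolding greedy_def by blast
        moreover have "vs!j \<in> A" "vs!i \<in> A" using nth that by auto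
        ultimately show ?thesis using coarse by blast
      qed
      have s2: "inner c x \<le> inner c (vs!i)" if "x \<in> A - set vs" "i < r" for x i
      proof -
        have "inner u x \<le> inner u (vs!i)" using gu that unfolding greedy_def by blast
        moreover have "x \<in> A" "vs!i \<in> A" using nth that by auto
        ultimately show ?thesis using coarse by blast
      qed
      show ?thesis unfolding greedy_def using vs(1) by (auto intro: s1 s2)
    qed
    then have "optimal r w A c vs" using greedy_optimal[OF vw fin rA] by blast
    then have "lval r w c oc \<le> lval r w c vs" using oc unfolding optimal_def by blast
    moreover have "lval r w c vs \<le> lval r w c oc" using oc vs(1) unfolding optimal_def by blast
    ultimately have "lval r w c vs = lval r w c oc" by linarith
    then show "inner c p = lval r w c oc" using vs by (simp add: inner_lpt)
  qed
  have ule: "\<forall>p\<in>?P. inner u p \<le> lval r w u ou"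
  proof
    fix p assume "p \<in> ?P"
    then have "p \<in> lineup_polytope r w A" unfolding lineup_polytope_def by (rule hull_inc)
    then show "inner u p \<le> lval r w u ou" by (rule lineup_le_opt[OF ou])
  qed
  have cx: "inner c x = lval r w c oc"
    using transfer[OF finP x[unfolded lineup_polytope_def] ule ux uc] .
  show ?thesis
  proof
    fix y assume "y \<in> lineup_polytope r w A"
    from lineup_le_opt[OF oc this] show "inner c y \<le> inner c x" using cx by linarith
  qed
qed

lemma lineup_const:
  assumes vw: "valid_weights r w" and k: "\<forall>a\<in>A. inner l a = \<kappa>"
    and x: "x \<in> lineup_polytope r w A"
  shows "inner l x = \<kappa>"
proof (rule hull_eq[OF _ x[unfolded lineup_polytope_def]])
  show "\<forall>p\<in>lineup_points r w A. inner l p = \<kappa>"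
  proof
    fix p assume "p \<in> lineup_points r w A"
    then obtain vs where vs: "vlist r A vs" "p = lpt r w vs" unfolding lineup_points_eq by auto
    have "vs ! i \<in> A" if "i < r" for i using vs(1) that unfolding vlist_def by auto
    then have "inner l p = (\<Sum>i<r. w i * \<kappa>)" using vs k
      by (simp add: inner_lpt lval_def)
    also have "\<dots> = \<kappa>" using vw unfolding valid_weights_def by (simp add: sum_distrib_right[symmetric])
    finally show "inner l p = \<kappa>" .
  qed
qed

lemma argmax_face:
  assumes fin: "finite A" and rA: "r \<le> card A"
  shows "\<exists>M. {x\<in>lineup_polytope r w A. \<forall>y\<in>lineup_polytope r w A. inner u y \<le> inner u x}
           = lineup_polytope r w A \<inter> {x. inner u x = M}
         \<and> {x\<in>lineup_polytope r w A. \<forall>y\<in>lineup_polytope r w A. inner u y \<le> inner u x} face_of lineup_polytope r w A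
         \<and> {x\<in>lineup_polytope r w A. \<forall>y\<in>lineup_polytope r w A. inner u y \<le> inner u x} \<noteq> {}"
proof -
  obtain ou where ou: "optimal r w A u ou" using optimal_exists[OF fin rA] by blast
  let ?M = "lval r w u ou"
  let ?Q = "lineup_polytope r w A"
  have le: "\<And>y. y \<in> ?Q \<Longrightarrow> inner u y \<le> ?M" using lineup_le_opt[OF ou] by blast
  have pin: "lpt r w ou \<in> ?Q" using lpt_in ou unfolding optimal_def by blast
  have eq: "{x\<in>?Q. \<forall>y\<in>?Q. inner u y \<le> inner u x} = ?Q \<inter> {x. inner u x = ?M}"
  proof (intro set_eqI iffI)
    fix x assume "x \<in> {x\<in>?Q. \<forall>y\<in>?Q. inner u y \<le> inner u x}"
    then show "x \<in> ?Q \<inter> {x. inner u x = ?M}" using le pin by (force simp: inner_lpt)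
  next
    fix x assume "x \<in> ?Q \<inter> {x. inner u x = ?M}"
    then show "x \<in> {x\<in>?Q. \<forall>y\<in>?Q. inner u y \<le> inner u x}" using le by auto
  qed
  have "?Q \<inter> {x. inner u x = ?M} face_of ?Q"
    using le by (intro face_of_Int_supporting_hyperplane_le) (auto simp: lineup_polytope_def convex_convex_hull)
  moreover have "lpt r w ou \<in> ?Q \<inter> {x. inner u x = ?M}" using pin by (simp add: inner_lpt)
  ultimately show ?thesis using eq by (intro exI[of _ ?M]) auto
qed

lemma full:
  assumes vw: "valid_weights n w" and fin: "finite A" and nA: "n = card A"
    and c: "c \<in> face_normal_cone (lineup_polytope n w A)
               {x\<in>lineup_polytope n w A. \<forall>y\<in>lineup_polytope n w A. inner u y \<le> inner u x}"
    and a: "a \<in> A" and b: "b \<in> A" and ab: "inner u a \<le> inner u b"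
  shows "inner c a \<le> inner c b"
proof (cases "a = b")
  case True then show ?thesis by simp
next
  case False
  let ?Q = "lineup_polytope n w A"
  obtain os where os: "optimal n w A u os" using optimal_exists[OF fin] nA by blast
  have osl: "length os = n" "distinct os" "set os \<subseteq> A" using os unfolding optimal_def vlist_def by auto
  have "set os = A" using osl nA fin by (metis card_subset_eq distinct_card)
  then have "a \<in> set os" "b \<in> set os" using a b by auto
  then obtain i j where ij0: "i < length os" "os ! i = a" "j < length os" "os ! j = b"
    by (auto simp: in_set_conv_nth)
  then have ij: "i < n" "j < n" "os ! i = a" "os ! j = b" using osl(1) by auto
  have "i \<noteq> j" using ij False by auto
  have "\<exists>ls. optimal n w A u ls \<and> (\<exists>i' j'. j' < i' \<and> i' < n \<and> ls ! i' = a \<and> ls ! j' = b)"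
  proof (cases "j < i")
    case True then show ?thesis using os ij by blast
  next
    case False
    then have "i < j" using \<open>i \<noteq> j\<close> by simp
    have "greedy n A u os" using optimal_greedy[OF vw os] .
    then have "inner u b \<le> inner u a" using \<open>i < j\<close> ij unfolding greedy_def by blast
    then have abeq: "inner u a = inner u b" using ab by simp
    define ls where "ls = os[i := os!j, j := os!i]"
    have vl: "vlist n A ls" using osl ij unfolding ls_def vlist_def by auto
    have "inner u (ls ! k) = inner u (os ! k)" if "k < n" for k
      using that ij osl abeq unfolding ls_def by (auto simp: nth_list_update)
    then have "lval n w u ls = lval n w u os" unfolding lval_def by simp
    then have "optimal n w A u ls" using os vl unfolding optimal_def by simp
    moreover have "ls ! j = a" "ls ! i = b" using ij osl unfolding ls_def by (auto simp: nth_list_update)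
    ultimately show ?thesis using \<open>i < j\<close> ij by blast
  qed
  then obtain ls i' j' where ls: "optimal n w A u ls" "j' < i'" "i' < n" "ls ! i' = a" "ls ! j' = b"
    by blast
  have vl: "vlist n A ls" using ls(1) unfolding optimal_def by blast
  have pin: "lpt n w ls \<in> ?Q" using lpt_in[OF vl] .
  have "\<forall>y\<in>?Q. inner u y \<le> inner u (lpt n w ls)"
    using lineup_le_opt[OF ls(1)] by (simp add: inner_lpt)
  then have "lpt n w ls \<in> {x\<in>?Q. \<forall>y\<in>?Q. inner u y \<le> inner u x}" using pin by blast
  then have cmax: "\<forall>y\<in>?Q. inner c y \<le> inner c (lpt n w ls)" using c unfolding face_normal_cone_def by blast
  have "lval n w c us \<le> lval n w c ls" if "vlist n A us" for us
  proof -
    have "inner c (lpt n w us) \<le> inner c (lpt n w ls)" using cmax lpt_in[OF that] by blast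
    then show ?thesis by (simp add: inner_lpt)
  qed
  then have "optimal n w A c ls"
    unfolding optimal_def using vl by blast
  then have "greedy n A c ls" using optimal_greedy[OF vw] by blast
  then have "\<forall>i j. i < j \<longrightarrow> j < n \<longrightarrow> inner c (ls!j) \<le> inner c (ls!i)" unfolding greedy_def by blast
  then have "inner c (ls!i') \<le> inner c (ls!j')" using ls(2,3) by blast
  then show ?thesis using ls(4,5) by simp
qed



definition colvec :: "('n \<Rightarrow> real) \<Rightarrow> real^('d::finite \<times> 'n::finite)" where
  "colvec m = (\<chi> p. m (snd p))"

lemma L_cols:
  assumes "l \<in> (L_space :: (real^('d::finite \<times> 'n::finite)) set)"
  shows "l $ (i, j) = l $ (i', j)"
  using assms unfolding L_space_def
proof (induction rule: span_induct_alt)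
  case base then show ?case by simp
next
  case (step c x y) then show ?case by auto
qed

lemma colvec_in_L: "(colvec m :: real^('d::finite \<times> 'n::finite)) \<in> L_space"
proof -
  let ?e = "\<lambda>j. (\<chi> p. if snd p = j then 1 else 0) :: real^('d \<times> 'n)"
  have eq: "colvec m = (\<Sum>j\<in>UNIV. m j *\<^sub>R ?e j)"
  proof (rule vec_eq_iff[THEN iffD2], rule allI)
    fix p :: "'d \<times> 'n"
    have "(\<Sum>j\<in>UNIV. m j *\<^sub>R ?e j) $ p = (\<Sum>j\<in>UNIV. (if j = snd p then m j else 0))"
      by (rule trans[OF sum_component]) (rule sum.cong, auto)
    also have "\<dots> = m (snd p)" by (subst sum.delta) auto
    finally show "colvec m $ p = (\<Sum>j\<in>UNIV. m j *\<^sub>R ?e j) $ p" by (simp add: colvec_def)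
  qed
  show ?thesis unfolding eq L_space_def
    by (intro span_sum span_scale span_base) auto
qed

definition monocols :: "real^('d::{finite,linorder} \<times> 'n::finite) \<Rightarrow> bool" where
  "monocols x \<longleftrightarrow> (\<forall>j i i'. i \<le> i' \<longrightarrow> x $ (i, j) \<le> x $ (i', j))"

lemma T_bar_iff: "x \<in> T_bar \<longleftrightarrow> monocols x"
proof
  assume "x \<in> T_bar"
  then obtain t l where tl: "x = t + l" "t \<in> T_cone" "l \<in> L_space" unfolding T_bar_def by blast
  show "monocols x" unfolding monocols_def
  proof (intro allI impI)
    fix j i i' :: 'a
    show "i \<le> i' \<Longrightarrow> x $ (i, j) \<le> x $ (i', j)" for j i i'
      using tl L_cols[OF tl(3), of i j i'] unfolding T_cone_def by auto
  qed
next
  assume m: "monocols x"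
  define i0 where "i0 = Min (UNIV :: 'a set)"
  have i0: "i0 \<le> i" for i unfolding i0_def by (rule Min_le) auto
  define l where "l = (colvec (\<lambda>j. x $ (i0, j)) :: real^('a \<times> 'b))"
  have "x - l \<in> T_cone" unfolding T_cone_def l_def colvec_def
    using m i0 unfolding monocols_def by auto
  moreover have "l \<in> L_space" unfolding l_def by (rule colvec_in_L)
  ultimately show "x \<in> T_bar" unfolding T_bar_def by force
qed

lemma monocols_const_L:
  assumes "monocols x" "monocols (-x)"
  shows "x \<in> (L_space :: (real^('d::{finite,linorder} \<times> 'n::finite)) set)"
proof -
  define i0 where "i0 = Min (UNIV :: 'd set)"
  have i0: "i0 \<le> i" for i unfolding i0_def by (rule Min_le) auto
  have "x = colvec (\<lambda>j. x $ (i0, j))"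
  proof (rule vec_eq_iff[THEN iffD2], rule allI)
    fix p :: "'d \<times> 'n"
    obtain i j where p: "p = (i, j)" by force
    have "x $ (i0, j) \<le> x $ (i, j)" "(-x) $ (i0, j) \<le> (-x) $ (i, j)"
      using assms i0 unfolding monocols_def by blast+
    then show "x $ p = colvec (\<lambda>j. x $ (i0, j)) $ p" unfolding p colvec_def by simp
  qed
  then show ?thesis using colvec_in_L by metis
qed

lemma inner_Pi_vert:
  "inner c (Pi_vert f :: real^('d::finite \<times> 'n::finite)) = (\<Sum>j\<in>UNIV. c $ (f j, j))"
proof -
  have "inner c (Pi_vert f) = (\<Sum>p\<in>UNIV. c $ p * (Pi_vert f) $ p)"
    by (simp add: inner_vec_def)
  also have "\<dots> = (\<Sum>p\<in>UNIV. (if fst p = f (snd p) then c $ p else 0))"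
    by (rule sum.cong) (auto simp: Pi_vert_def)
  also have "\<dots> = (\<Sum>i\<in>UNIV. \<Sum>j\<in>UNIV. (if i = f j then c $ (i, j) else 0))"
    by (subst sum.cartesian_product) (auto simp: split_beta intro!: sum.cong)
  also have "\<dots> = (\<Sum>j\<in>UNIV. \<Sum>i\<in>UNIV. (if i = f j then c $ (i, j) else 0))"
    by (rule sum.swap)
  also have "\<dots> = (\<Sum>j\<in>UNIV. c $ (f j, j))"
    by (rule sum.cong) (auto simp: sum.delta)
  finally show ?thesis .
qed

lemma inner_Pi_vert_upd:
  "inner c (Pi_vert (f(j := i)) :: real^('d::finite \<times> 'n::finite))
     = c $ (i, j) + (\<Sum>k\<in>UNIV - {j}. c $ (f k, k))"
proof -
  have "inner c (Pi_vert (f(j := i))) = c $ (i, j) + (\<Sum>k\<in>UNIV - {j}. c $ ((f(j:=i)) k, k))"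
    unfolding inner_Pi_vert by (subst sum.remove[of UNIV j]) auto
  also have "(\<Sum>k\<in>UNIV - {j}. c $ ((f(j:=i)) k, k)) = (\<Sum>k\<in>UNIV - {j}. c $ (f k, k))"
    by (rule sum.cong) auto
  finally show ?thesis .
qed

lemma Pi_vert_inj: "inj (Pi_vert :: ('n \<Rightarrow> 'd) \<Rightarrow> real^('d::finite \<times> 'n::finite))"
proof (rule injI)
  fix f g :: "'n \<Rightarrow> 'd"
  assume eq: "Pi_vert f = (Pi_vert g :: real^('d \<times> 'n))"
  show "f = g"
  proof
    fix j
    have "(Pi_vert f :: real^('d \<times> 'n)) $ (f j, j) = 1" by (simp add: Pi_vert_def)
    then have "(Pi_vert g :: real^('d \<times> 'n)) $ (f j, j) = 1" using eq by simp
    then show "f j = g j" by (simp add: Pi_vert_def split: if_splits)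
  qed
qed

lemma Pi_finite: "finite (Pi_vertices :: (real^('d::finite \<times> 'n::finite)) set)"
  unfolding Pi_vertices_def by simp

lemma Pi_card: "card (Pi_vertices :: (real^('d::finite \<times> 'n::finite)) set) = CARD('d) ^ CARD('n)"
proof -
  have "card (Pi_vertices :: (real^('d \<times> 'n)) set) = CARD('n \<Rightarrow> 'd)"
    unfolding Pi_vertices_def by (rule card_image[OF Pi_vert_inj])
  also have "\<dots> = CARD('d) ^ CARD('n)" by (simp add: card_fun)
  finally show ?thesis .
qed

lemma L_const_vert:
  assumes "l \<in> L_space" "a \<in> Pi_vertices" "b \<in> (Pi_vertices :: (real^('d::finite \<times> 'n::finite)) set)"
  shows "inner l a = inner l b"
proof -
  obtain f g where fg: "a = Pi_vert f" "b = Pi_vert g" using assms(2,3) unfolding Pi_vertices_def by blast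
  show ?thesis unfolding fg inner_Pi_vert
    by (rule sum.cong) (auto intro: L_cols[OF assms(1)])
qed



theorem proposition2p3:
  fixes r :: nat and w w' :: "nat \<Rightarrow> real"
    and K :: "(real^('d::{finite,linorder} \<times> 'n::finite)) set"
  assumes "1 \<le> r" and "r \<le> CARD('d) ^ CARD('n)"
    and "valid_weights r w"
    and "valid_weights (CARD('d) ^ CARD('n)) w'"
    and "K \<in> test_fan (normal_fan (lineup_polytope r w (Pi_vertices :: (real^('d \<times> 'n)) set)))"
    and "aff_dim K = aff_dim (L_space :: (real^('d \<times> 'n)) set) + 1"
  shows "K \<in> normal_fan (lineup_polytope (CARD('d) ^ CARD('n)) w' (Pi_vertices :: (real^('d \<times> 'n)) set))"
proof -
  let ?A = "Pi_vertices :: (real^('d \<times> 'n)) set"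
  let ?L = "L_space :: (real^('d \<times> 'n)) set"
  define n where "n = CARD('d) ^ CARD('n)"
  let ?Qr = "lineup_polytope r w ?A"
  let ?Qn = "lineup_polytope n w' ?A"
  have fin: "finite ?A" by (rule Pi_finite)
  have cardA: "card ?A = n" unfolding n_def by (rule Pi_card)
  have rA: "r \<le> card ?A" using assms(2) cardA n_def by simp
  have vw: "valid_weights r w" by fact
  have vw': "valid_weights n w'" using assms(4) n_def by simp
  obtain C F where KC: "K = C \<inter> T_bar" and CF: "C = face_normal_cone ?Qr F"
    and F: "F face_of ?Qr" "F \<noteq> {}"
    using assms(5) unfolding test_fan_def normal_fan_def by blast
  have FQ: "F \<subseteq> ?Qr" using F(1) face_of_imp_subset by blast
  define a0 where "a0 = (Pi_vert (\<lambda>_. undefined) :: real^('d \<times> 'n))"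
  have a0: "a0 \<in> ?A" unfolding a0_def Pi_vertices_def by simp
  have lconst: "inner l x = inner l a0" if "l \<in> ?L" "x \<in> lineup_polytope s ww ?A" "valid_weights s ww"
    for l x s ww
  proof (rule lineup_const[OF that(3) _ that(2)])
    show "\<forall>a\<in>?A. inner l a = inner l a0" using L_const_vert[OF that(1) _ a0] by blast
  qed
  have Lmono: "monocols l" if "l \<in> ?L" for l
    unfolding monocols_def using L_cols[OF that] by (metis order_refl)
  have addL: "x + l \<in> K" if "x \<in> K" "l \<in> ?L" for x l
  proof -
    have "x \<in> C" "x \<in> T_bar" using that KC by auto
    have "x + l \<in> C" unfolding CF face_normal_cone_def
    proof (intro CollectI ballI)
      fix y z assume z: "z \<in> F" and y: "y \<in> ?Qr"
      have "inner x y \<le> inner x z" using \<open>x \<in> C\<close> z y unfolding CF face_normal_cone_def by blast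
      moreover have "inner l y = inner l z" using lconst[OF that(2) y vw] lconst[OF that(2) _ vw, of z] z FQ by auto
      ultimately show "inner (x + l) y \<le> inner (x + l) z" by (simp add: inner_add_left)
    qed
    moreover have "x + l \<in> T_bar" using \<open>x \<in> T_bar\<close> Lmono[OF that(2)]
      unfolding T_bar_iff monocols_def by (auto intro: add_mono)
    ultimately show ?thesis using KC by blast
  qed
  have scaleK: "t *\<^sub>R x \<in> K" if "x \<in> K" "0 \<le> t" for x t
  proof -
    have "x \<in> C" "x \<in> T_bar" using that KC by auto
    have "t *\<^sub>R x \<in> C" unfolding CF face_normal_cone_def
    proof (intro CollectI ballI)
      fix y z assume z: "z \<in> F" and y: "y \<in> ?Qr"
      have "inner x y \<le> inner x z" using \<open>x \<in> C\<close> z y unfolding CF face_normal_cone_def by blast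
      then show "inner (t *\<^sub>R x) y \<le> inner (t *\<^sub>R x) z" using that(2) by (simp add: mult_left_mono)
    qed
    moreover have "t *\<^sub>R x \<in> T_bar" using \<open>x \<in> T_bar\<close> that(2)
      unfolding T_bar_iff monocols_def by (auto intro: mult_left_mono)
    ultimately show ?thesis using KC by blast
  qed
  have LK: "?L \<subseteq> K"
  proof
    fix l assume l: "l \<in> ?L"
    have "0 \<in> C" unfolding CF face_normal_cone_def by simp
    moreover have "0 \<in> T_bar" unfolding T_bar_iff monocols_def by simp
    ultimately have "0 \<in> K" using KC by blast
    then show "l \<in> K" using addL[OF _ l] by (metis add_0)
  qed
  have subL: "subspace ?L" unfolding L_space_def by simp
  have "0 \<in> K" using LK subL subspace_0 by blast
  then have "aff_dim K = int (dim K)" by (intro aff_dim_zero hull_inc)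
  moreover have "aff_dim ?L = int (dim ?L)" by (rule aff_dim_subspace[OF subL])
  ultimately have dimK: "dim K = dim ?L + 1" using assms(6) by simp
  obtain v where v: "v \<in> K" "v \<notin> ?L"
  proof -
    have "\<not> K \<subseteq> ?L"
    proof
      assume "K \<subseteq> ?L"
      then have "dim K \<le> dim ?L" by (rule dim_subset)
      then show False using dimK by simp
    qed
    then show ?thesis using that by blast
  qed
  have spanL: "span ?L = ?L" using subL by simp
  have vs: "v \<notin> span ?L" unfolding spanL by (rule v(2))
  have "dim (insert v ?L) = dim ?L + 1" using vs by (simp add: dim_insert)
  then have "span (insert v ?L) = span K"
    using LK v(1) dimK by (intro dim_eq_span) auto
  then have decomp0: "\<exists>s. c - s *\<^sub>R v \<in> ?L" if "c \<in> K" for c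
    using that span_breakdown_eq[of c v ?L] spanL span_base[of c K] by auto
  have vT: "monocols v" using v(1) KC T_bar_iff by blast
  have decomp: "\<exists>s l. 0 \<le> s \<and> l \<in> ?L \<and> c = l + s *\<^sub>R v" if cK: "c \<in> K" for c
  proof -
    obtain s where s: "c - s *\<^sub>R v \<in> ?L" using decomp0[OF cK] by blast
    have "0 \<le> s"
    proof (rule ccontr)
      assume "\<not> 0 \<le> s"
      then have sn: "s < 0" by simp
      have "- (c - s *\<^sub>R v) \<in> ?L" by (rule subspace_neg[OF subL s])
      then have "c + - (c - s *\<^sub>R v) \<in> K" using addL[OF cK] by blast
      then have "s *\<^sub>R v \<in> K" by simp
      moreover have "0 \<le> - 1 / s" using sn by (simp add: divide_simps)
      ultimately have "(- 1 / s) *\<^sub>R (s *\<^sub>R v) \<in> K" by (rule scaleK)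
      then have "- v \<in> K" using sn by simp
      then have "monocols (- v)" using KC T_bar_iff by blast
      then have "v \<in> ?L" using monocols_const_L vT by blast
      then show False using v(2) by blast
    qed
    then show ?thesis using s by (intro exI[of _ s] exI[of _ "c - s *\<^sub>R v"]) auto
  qed
  define G where "G = {x\<in>?Qn. \<forall>y\<in>?Qn. inner v y \<le> inner v x}"
  have nA: "n \<le> card ?A" using cardA by simp
  have Gface: "G face_of ?Qn" "G \<noteq> {}"
    using argmax_face[OF fin nA, of w' v] unfolding G_def by auto
  have "K = face_normal_cone ?Qn G"
  proof
    show "K \<subseteq> face_normal_cone ?Qn G"
    proof
      fix c assume c: "c \<in> K"
      obtain s l where sl: "0 \<le> s" "l \<in> ?L" "c = l + s *\<^sub>R v" using decomp[OF c] by blast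
      show "c \<in> face_normal_cone ?Qn G" unfolding face_normal_cone_def
      proof (intro CollectI ballI)
        fix x y assume x: "x \<in> G" and y: "y \<in> ?Qn"
        have xQ: "x \<in> ?Qn" using x G_def by blast
        have "inner v y \<le> inner v x" using x y G_def by blast
        then have "s * inner v y \<le> s * inner v x" using sl(1) by (rule mult_left_mono)
        moreover have "inner l y = inner l x" using lconst[OF sl(2) y vw'] lconst[OF sl(2) xQ vw'] by simp
        ultimately show "inner c y \<le> inner c x" using sl(3) by (simp add: inner_add_left)
      qed
    qed
  next
    show "face_normal_cone ?Qn G \<subseteq> K"
    proof
      fix c assume c: "c \<in> face_normal_cone ?Qn G"
      have coarse: "\<forall>a\<in>?A. \<forall>b\<in>?A. inner v a \<le> inner v b \<longrightarrow> inner c a \<le> inner c b"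
        using full[OF vw' fin cardA[symmetric], of c v] c unfolding G_def by blast
      have "monocols c" unfolding monocols_def
      proof (intro allI impI)
        fix j :: 'n and i i' :: 'd assume ii: "i \<le> i'"
        let ?f = "\<lambda>_::'n. i"
        have aA: "Pi_vert (?f(j := i)) \<in> ?A" "Pi_vert (?f(j := i')) \<in> ?A"
          unfolding Pi_vertices_def by auto
        have "v $ (i, j) \<le> v $ (i', j)" using vT ii unfolding monocols_def by blast
        then have "inner v (Pi_vert (?f(j := i))) \<le> inner v (Pi_vert (?f(j := i')))"
          unfolding inner_Pi_vert_upd by simp
        then have "inner c (Pi_vert (?f(j := i))) \<le> inner c (Pi_vert (?f(j := i')))"
          using coarse aA by blast
        then show "c $ (i, j) \<le> c $ (i', j)"
          unfolding inner_Pi_vert_upd by simp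
      qed
      then have cT: "c \<in> T_bar" using T_bar_iff by blast
      have vC: "v \<in> C" using v(1) KC by blast
      have "c \<in> C" unfolding CF face_normal_cone_def
      proof (intro CollectI ballI)
        fix x y assume x: "x \<in> F" and y: "y \<in> ?Qr"
        have xQ: "x \<in> ?Qr" using x FQ by blast
        have "\<forall>y\<in>?Qr. inner v y \<le> inner v x" using vC x unfolding CF face_normal_cone_def by blast
        then have "\<forall>y\<in>?Qr. inner c y \<le> inner c x" using main_r[OF vw fin rA coarse xQ] by blast
        then show "inner c y \<le> inner c x" using y by blast
      qed
      then show "c \<in> K" using cT KC by blast
    qed
  qed
  then show ?thesis unfolding normal_fan_def n_def using Gface n_def by blast
qed

end
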